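(* Let $\mathcal{I}$ be an ideal on $\omega$ such that $\mathrm{fin}\subseteq\mathcal{I}$. If there is a Borel $\mathcal{I}$-MED family $\mathcal{E}\subseteq\omega^\omega$, then there is a closed $\mathcal{I}$-MED family (closed in $\omega^\omega$ with the product topology).
   Context: $\mathrm{fin}$ is the ideal of finite subsets of $\omega$. Functions $f,g\in\omega^\omega$ are $\mathcal{I}$-eventually different ($\mathcal{I}$-ED) if $\{n:f(n)=g(n)\}\in\mathcal{I}$; $\mathcal{E}\subseteq\omega^\omega$ is an $\mathcal{I}$-MED family if any two distinct members are $\mathcal{I}$-ED and for every $h\in\omega^\omega$ there is $f\in\mathcal{E}$ such that $f,h$ are not $\mathcal{I}$-ED. *)

theory Defs
  imports "HOL-Analysis.Analysis"
begin

text \<open>Baire space \<open>\<omega>\<^sup>\<omega>\<close> is the type \<open>nat \<Rightarrow> nat\<close>, carrying the product topology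
  (the instance from HOL-Analysis Function_Topology; \<open>nat\<close> has the discrete topology).\<close>

definition fin_ideal :: "nat set set" where
  "fin_ideal = {A. finite A}"

definition is_ideal :: "nat set set \<Rightarrow> bool" where
  "is_ideal I \<longleftrightarrow> {} \<in> I \<and> UNIV \<notin> I \<and>
     (\<forall>A B. A \<in> I \<longrightarrow> B \<subseteq> A \<longrightarrow> B \<in> I) \<and>
     (\<forall>A B. A \<in> I \<longrightarrow> B \<in> I \<longrightarrow> A \<union> B \<in> I)"

definition I_ED :: "nat set set \<Rightarrow> (nat \<Rightarrow> nat) \<Rightarrow> (nat \<Rightarrow> nat) \<Rightarrow> bool" where
  "I_ED I f g \<longleftrightarrow> {n. f n = g n} \<in> I"

definition I_MED :: "nat set set \<Rightarrow> (nat \<Rightarrow> nat) set \<Rightarrow> bool" where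
  "I_MED I E \<longleftrightarrow> (\<forall>f\<in>E. \<forall>g\<in>E. f \<noteq> g \<longrightarrow> I_ED I f g) \<and>
     (\<forall>h. \<exists>f\<in>E. \<not> I_ED I f h)"

end

theory Submission
  imports Defs "HOL-Library.Nat_Bijection"
begin

definition agr :: "nat \<Rightarrow> (nat \<Rightarrow> nat) \<Rightarrow> (nat \<Rightarrow> nat) \<Rightarrow> bool" where
  "agr k f g \<longleftrightarrow> (\<forall>i<k. f i = g i)"

definition clos :: "(nat \<Rightarrow> nat) set \<Rightarrow> bool" where
  "clos F \<longleftrightarrow> (\<forall>g. (\<forall>k. \<exists>f\<in>F. agr k f g) \<longrightarrow> g \<in> F)"

definition clos2 :: "((nat \<Rightarrow> nat) \<times> (nat \<Rightarrow> nat)) set \<Rightarrow> bool" where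
  "clos2 G \<longleftrightarrow> (\<forall>f x. (\<forall>k. \<exists>f' x'. (f', x') \<in> G \<and> agr k f' f \<and> agr k x' x) \<longrightarrow> (f, x) \<in> G)"

definition PP :: "(nat \<Rightarrow> nat) set \<Rightarrow> bool" where
  "PP A \<longleftrightarrow> (\<exists>G. clos2 G \<and> A = fst ` G \<and> (\<forall>f x y. (f, x) \<in> G \<longrightarrow> (f, y) \<in> G \<longrightarrow> x = y))"

lemma open_cyl: "open {h. agr k g h}"
proof -
  have "open {f. \<forall>i\<in>{..<k}. f (id i) \<in> {g i}}"
    by (rule product_topology_basis') (auto simp: open_discrete)
  moreover have "{f. \<forall>i\<in>{..<k}. f (id i) \<in> {g i}} = {h. agr k g h}"
    by (auto simp: agr_def)
  ultimately show ?thesis by simp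
qed

lemma open_has_cyl:
  assumes "open U" "g \<in> U"
  shows "\<exists>k. {h. agr k g h} \<subseteq> U"
proof -
  have "openin (product_topology (\<lambda>i. euclidean) UNIV) U"
    using assms(1) unfolding open_fun_def by auto
  from product_topology_open_contains_basis[OF this assms(2)]
  obtain X where X: "g \<in> Pi\<^sub>E UNIV X" "finite {i. X i \<noteq> UNIV}" "Pi\<^sub>E UNIV X \<subseteq> U"
    by auto
  obtain k where k: "\<forall>i\<in>{i. X i \<noteq> UNIV}. i < k"
    using X(2) finite_nat_bounded by (meson lessThan_iff subsetD)
  have "{h. agr k g h} \<subseteq> Pi\<^sub>E UNIV X"
  proof
    fix h assume "h \<in> {h. agr k g h}"
    then have "\<forall>i<k. h i = g i" by (auto simp: agr_def)
    then have "h i \<in> X i" for i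
      using X(1) k by (cases "i < k") auto
    then show "h \<in> Pi\<^sub>E UNIV X" by auto
  qed
  then show ?thesis using X(3) by blast
qed

lemma clos_closed: "clos F \<Longrightarrow> closed F"
  unfolding closed_def
proof (subst open_subopen, intro ballI)
  fix g assume c: "clos F" and g: "g \<in> - F"
  then obtain k where k: "\<forall>f\<in>F. \<not> agr k f g" unfolding clos_def by blast
  have "{h. agr k g h} \<subseteq> - F" using k by (auto simp: agr_def)
  moreover have "g \<in> {h. agr k g h}" by (simp add: agr_def)
  ultimately show "\<exists>T. open T \<and> g \<in> T \<and> T \<subseteq> - F" using open_cyl by blast
qed

lemma closed_clos: "closed F \<Longrightarrow> clos F"
  unfolding clos_def
proof (intro allI impI)
  fix g assume c: "closed F" and a: "\<forall>k. \<exists>f\<in>F. agr k f g"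
  show "g \<in> F"
  proof (rule ccontr)
    assume "g \<notin> F"
    then obtain k where "{h. agr k g h} \<subseteq> - F"
      using open_has_cyl[of "-F" g] c by (auto simp: closed_def)
    moreover obtain f where "f \<in> F" "agr k f g" using a by blast
    moreover have "agr k g f" using \<open>agr k f g\<close> by (auto simp: agr_def)
    ultimately show False by blast
  qed
qed

lemma PP_clos:
  assumes "clos A" shows "PP A"
proof -
  define G where "G = A \<times> {\<lambda>_::nat. 0::nat}"
  have "clos2 G"
    unfolding clos2_def
  proof (intro allI impI)
    fix f x assume a: "\<forall>k. \<exists>f' x'. (f', x') \<in> G \<and> agr k f' f \<and> agr k x' x"
    have "f \<in> A" using assms a unfolding clos_def G_def by blast
    moreover have "x = (\<lambda>_. 0)"
    proof
      fix i obtain f' x' where "(f', x') \<in> G" "agr (Suc i) x' x" using a by blast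
      then show "x i = 0" by (auto simp: G_def agr_def)
    qed
    ultimately show "(f, x) \<in> G" by (simp add: G_def)
  qed
  moreover have "A = fst ` G" by (force simp: G_def)
  ultimately show ?thesis unfolding PP_def G_def by blast
qed

lemma agr_mono: "agr k a b \<Longrightarrow> j \<le> k \<Longrightarrow> agr j a b"
  by (auto simp: agr_def)

lemma cyl_eq: "agr k a b \<Longrightarrow> j \<le> k \<Longrightarrow> {h. agr j a h} = {h. agr j b h}"
  by (auto simp: agr_def)

lemma PP_open:
  assumes "open U" shows "PP U"
proof -
  define G where "G = {(g, \<lambda>_::nat. k) | g k. {h. agr k g h} \<subseteq> U \<and> (\<forall>j<k. \<not> {h. agr j g h} \<subseteq> U)}"
  have fst: "U = fst ` G"
  proof
    show "fst ` G \<subseteq> U" by (auto simp: G_def agr_def)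
    show "U \<subseteq> fst ` G"
    proof
      fix g assume "g \<in> U"
      then have "\<exists>k. {h. agr k g h} \<subseteq> U" using open_has_cyl assms by blast
      then obtain k where "{h. agr k g h} \<subseteq> U \<and> (\<forall>j<k. \<not> {h. agr j g h} \<subseteq> U)"
        using exists_least_iff[of "\<lambda>k. {h. agr k g h} \<subseteq> U"] by blast
      then have "(g, \<lambda>_. k) \<in> G" by (auto simp: G_def)
      then show "g \<in> fst ` G" by force
    qed
  qed
  have uniq: "\<forall>f x y. (f, x) \<in> G \<longrightarrow> (f, y) \<in> G \<longrightarrow> x = y"
  proof (intro allI impI)
    fix f x y assume "(f, x) \<in> G" "(f, y) \<in> G"
    then obtain k l where kl: "x = (\<lambda>_. k)" "y = (\<lambda>_. l)"
      "{h. agr k f h} \<subseteq> U" "\<forall>j<k. \<not> {h. agr j f h} \<subseteq> U"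
      "{h. agr l f h} \<subseteq> U" "\<forall>j<l. \<not> {h. agr j f h} \<subseteq> U"
      by (auto simp: G_def)
    then have "k = l" by (meson linorder_neqE_nat)
    then show "x = y" using kl by simp
  qed
  have "clos2 G"
    unfolding clos2_def
  proof (intro allI impI)
    fix g x assume a: "\<forall>k. \<exists>f' x'. (f', x') \<in> G \<and> agr k f' g \<and> agr k x' x"
    have xc: "x = (\<lambda>_. x 0)"
    proof
      fix i obtain f' x' where "(f', x') \<in> G" "agr (Suc i) x' x" using a by blast
      then show "x i = x 0" by (auto simp: G_def agr_def)
    qed
    obtain g' x' where gx: "(g', x') \<in> G" "agr (Suc (x 0)) g' g" "agr (Suc (x 0)) x' x"
      using a by blast
    then obtain c where c: "x' = (\<lambda>_. c)" "{h. agr c g' h} \<subseteq> U" "\<forall>j<c. \<not> {h. agr j g' h} \<subseteq> U"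
      by (auto simp: G_def)
    have "c = x 0" using gx(3) c(1) by (auto simp: agr_def)
    then have "{h. agr c g h} \<subseteq> U" "\<forall>j<c. \<not> {h. agr j g h} \<subseteq> U"
      using c(2,3) cyl_eq[OF gx(2)] by auto
    then have "(g, \<lambda>_. c) \<in> G" by (auto simp: G_def)
    then show "(g, x) \<in> G" using xc \<open>c = x 0\<close> by simp
  qed
  then show ?thesis unfolding PP_def using fst uniq by blast
qed

lemma PP_Inter:
  fixes A :: "nat \<Rightarrow> (nat \<Rightarrow> nat) set"
  assumes "\<And>n. PP (A n)" shows "PP (\<Inter>n. A n)"
proof -
  obtain Gs where Gs: "\<And>n. clos2 (Gs n)" "\<And>n. A n = fst ` Gs n"
    "\<And>n f x y. (f, x) \<in> Gs n \<Longrightarrow> (f, y) \<in> Gs n \<Longrightarrow> x = y"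
    using assms unfolding PP_def by metis
  define G where "G = {(f, x). \<forall>n. (f, \<lambda>i. x (prod_encode (n, i))) \<in> Gs n}"
  have fst: "(\<Inter>n. A n) = fst ` G"
  proof
    show "fst ` G \<subseteq> (\<Inter>n. A n)" using Gs(2) by (force simp: G_def)
    show "(\<Inter>n. A n) \<subseteq> fst ` G"
    proof
      fix f assume "f \<in> (\<Inter>n. A n)"
      then have "\<forall>n. \<exists>x. (f, x) \<in> Gs n" using Gs(2) by force
      then obtain xs where xs: "\<And>n. (f, xs n) \<in> Gs n" by metis
      define x where "x = (\<lambda>j. xs (fst (prod_decode j)) (snd (prod_decode j)))"
      have "(\<lambda>i. x (prod_encode (n, i))) = xs n" for n by (simp add: x_def)
      then have "(f, x) \<in> G" using xs by (simp add: G_def)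
      then show "f \<in> fst ` G" by force
    qed
  qed
  have uniq: "\<forall>f x y. (f, x) \<in> G \<longrightarrow> (f, y) \<in> G \<longrightarrow> x = y"
  proof (intro allI impI)
    fix f x y assume "(f, x) \<in> G" "(f, y) \<in> G"
    then have e: "(\<lambda>i. x (prod_encode (n, i))) = (\<lambda>i. y (prod_encode (n, i)))" for n
      using Gs(3)[of f "\<lambda>i. x (prod_encode (n, i))" n "\<lambda>i. y (prod_encode (n, i))"] by (auto simp: G_def)
    show "x = y"
    proof
      fix j
      obtain a b where ab: "prod_decode j = (a, b)" by (cases "prod_decode j")
      have "j = prod_encode (a, b)" using ab by (metis prod_decode_inverse)
      then show "x j = y j" using fun_cong[OF e[of a], of b] by simp
    qed
  qed
  have "clos2 G"
    unfolding clos2_def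
  proof (intro allI impI)
    fix f x assume a: "\<forall>k. \<exists>f' x'. (f', x') \<in> G \<and> agr k f' f \<and> agr k x' x"
    have "(f, \<lambda>i. x (prod_encode (n, i))) \<in> Gs n" for n
    proof -
      have "\<forall>k. \<exists>f' x'. (f', x') \<in> Gs n \<and> agr k f' f \<and> agr k x' (\<lambda>i. x (prod_encode (n, i)))"
      proof
        fix k
        define K where "K = Suc (k + (\<Sum>i<k. prod_encode (n, i)))"
        obtain f' x' where fx: "(f', x') \<in> G" "agr K f' f" "agr K x' x" using a by blast
        have lt: "prod_encode (n, i) < K" if "i < k" for i
        proof -
          have "prod_encode (n, i) \<le> (\<Sum>i<k. prod_encode (n, i))"
            using that by (intro member_le_sum) auto
          then show ?thesis by (simp add: K_def)
        qed
        have "(f', \<lambda>i. x' (prod_encode (n, i))) \<in> Gs n" using fx(1) by (simp add: G_def)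
        moreover have "agr k f' f" using fx(2) by (auto simp: agr_def K_def)
        moreover have "agr k (\<lambda>i. x' (prod_encode (n, i))) (\<lambda>i. x (prod_encode (n, i)))"
          using fx(3) lt by (auto simp: agr_def)
        ultimately show "\<exists>f' x'. (f', x') \<in> Gs n \<and> agr k f' f \<and> agr k x' (\<lambda>i. x (prod_encode (n, i)))"
          by blast
      qed
      then show ?thesis using Gs(1)[of n] unfolding clos2_def by blast
    qed
    then show "(f, x) \<in> G" by (simp add: G_def)
  qed
  then show ?thesis unfolding PP_def using fst uniq by blast
qed

lemma PP_disj_Union:
  fixes A :: "nat \<Rightarrow> (nat \<Rightarrow> nat) set"
  assumes "\<And>n. PP (A n)" "disjoint_family A" shows "PP (\<Union>n. A n)"
proof -
  obtain Gs where Gs: "\<And>n. clos2 (Gs n)" "\<And>n. A n = fst ` Gs n"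
    "\<And>n f x y. (f, x) \<in> Gs n \<Longrightarrow> (f, y) \<in> Gs n \<Longrightarrow> x = y"
    using assms unfolding PP_def by metis
  define G where "G = {(f, x). (f, \<lambda>i. x (Suc i)) \<in> Gs (x 0)}"
  have fst: "(\<Union>n. A n) = fst ` G"
  proof
    show "fst ` G \<subseteq> (\<Union>n. A n)" using Gs(2) by (force simp: G_def)
    show "(\<Union>n. A n) \<subseteq> fst ` G"
    proof
      fix f assume "f \<in> (\<Union>n. A n)"
      then obtain n y where y: "(f, y) \<in> Gs n" using Gs(2) by force
      define x where "x = (\<lambda>j. case j of 0 \<Rightarrow> n | Suc i \<Rightarrow> y i)"
      have "(\<lambda>i. x (Suc i)) = y" "x 0 = n" by (simp_all add: x_def)
      then have "(f, x) \<in> G" using y by (simp add: G_def)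
      then show "f \<in> fst ` G" by force
    qed
  qed
  have uniq: "\<forall>f x y. (f, x) \<in> G \<longrightarrow> (f, y) \<in> G \<longrightarrow> x = y"
  proof (intro allI impI)
    fix f x y assume xy: "(f, x) \<in> G" "(f, y) \<in> G"
    then have "f \<in> A (x 0)" "f \<in> A (y 0)" using Gs(2) by (force simp: G_def)+
    then have 0: "x 0 = y 0" using assms(2) unfolding disjoint_family_on_def by blast
    then have s: "(\<lambda>i. x (Suc i)) = (\<lambda>i. y (Suc i))" using xy Gs(3) by (auto simp: G_def)
    show "x = y"
    proof
      fix j show "x j = y j" using 0 fun_cong[OF s] by (cases j) auto
    qed
  qed
  have "clos2 G"
    unfolding clos2_def
  proof (intro allI impI)
    fix f x assume a: "\<forall>k. \<exists>f' x'. (f', x') \<in> G \<and> agr k f' f \<and> agr k x' x"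
    have "\<forall>k. \<exists>f' x'. (f', x') \<in> Gs (x 0) \<and> agr k f' f \<and> agr k x' (\<lambda>i. x (Suc i))"
    proof
      fix k
      obtain f' x' where fx: "(f', x') \<in> G" "agr (Suc k) f' f" "agr (Suc k) x' x" using a by blast
      have "x' 0 = x 0" using fx(3) by (simp add: agr_def)
      then have "(f', \<lambda>i. x' (Suc i)) \<in> Gs (x 0)" using fx(1) by (simp add: G_def)
      moreover have "agr k f' f" using fx(2) by (auto simp: agr_def)
      moreover have "agr k (\<lambda>i. x' (Suc i)) (\<lambda>i. x (Suc i))" using fx(3) by (auto simp: agr_def)
      ultimately show "\<exists>f' x'. (f', x') \<in> Gs (x 0) \<and> agr k f' f \<and> agr k x' (\<lambda>i. x (Suc i))"
        by blast
    qed
    then have "(f, \<lambda>i. x (Suc i)) \<in> Gs (x 0)" using Gs(1)[of "x 0"] unfolding clos2_def by blast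
    then show "(f, x) \<in> G" by (simp add: G_def)
  qed
  then show ?thesis unfolding PP_def using fst uniq by blast
qed

lemma borel_PP:
  assumes "A \<in> sets borel" shows "PP A \<and> PP (- A)"
  using assms unfolding sets_borel
proof (induct rule: sigma_sets.induct)
  case (Basic a)
  then have "open a" by simp
  then show ?case using PP_open PP_clos closed_clos by (simp add: closed_def)
next
  case Empty
  have "clos {}" "clos UNIV" by (auto simp: clos_def)
  then show ?case using PP_clos by simp
next
  case (Compl a)
  then show ?case by (simp add: Compl_eq_Diff_UNIV[symmetric])
next
  case (Union A)
  then have IH: "\<And>i. PP (A i)" "\<And>i. PP (- A i)" by auto
  have c: "PP (- (\<Union>(A ` UNIV)))"
    using PP_Inter[of "\<lambda>i. - A i"] IH(2) by simp
  define D where "D = (\<lambda>n. \<Inter>j. (if j < n then - A j else A n))"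
  have PD: "PP (D n)" for n
    unfolding D_def by (rule PP_Inter) (simp add: IH)
  have dj: "disjoint_family D"
    unfolding disjoint_family_on_def
  proof (intro ballI impI)
    fix m n :: nat assume "m \<noteq> n"
    then consider "m < n" | "n < m" by linarith
    then show "D m \<inter> D n = {}"
    proof cases
      case 1
      have "D n \<subseteq> - A m" unfolding D_def using 1 by (auto dest: spec[of _ m])
      moreover have "D m \<subseteq> A m" unfolding D_def by (auto dest: spec[of _ m])
      ultimately show ?thesis by blast
    next
      case 2
      have "D m \<subseteq> - A n" unfolding D_def using 2 by (auto dest: spec[of _ n])
      moreover have "D n \<subseteq> A n" unfolding D_def by (auto dest: spec[of _ n])
      ultimately show ?thesis by blast
    qed
  qed
  have "(\<Union>n. D n) = \<Union>(A ` UNIV)"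
  proof
    show "(\<Union>n. D n) \<subseteq> \<Union>(A ` UNIV)" unfolding D_def by (auto dest: spec[of _ 0])
    show "\<Union>(A ` UNIV) \<subseteq> (\<Union>n. D n)"
    proof
      fix x assume "x \<in> \<Union>(A ` UNIV)"
      then have "\<exists>n. x \<in> A n" by auto
      then obtain n where n: "x \<in> A n" "\<forall>j<n. x \<notin> A j"
        using exists_least_iff[of "\<lambda>n. x \<in> A n"] by blast
      then have "x \<in> D n" unfolding D_def by auto
      then show "x \<in> (\<Union>n. D n)" by blast
    qed
  qed
  then have "PP (\<Union>(A ` UNIV))" using PP_disj_Union[OF PD dj] by simp
  then show ?case using c by simp
qed

definition code :: "(nat \<Rightarrow> nat) \<Rightarrow> (nat \<Rightarrow> nat) \<Rightarrow> nat \<Rightarrow> nat" where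
  "code f x m = prod_encode (list_encode (map f [0..<Suc m]), list_encode (map x [0..<Suc m]))"

lemma code_fst: "j \<le> m \<Longrightarrow> list_decode (fst (prod_decode (code f x m))) ! j = f j"
  by (simp add: code_def prod_encode_inverse nth_append del: upt_Suc)

lemma code_snd: "j \<le> m \<Longrightarrow> list_decode (snd (prod_decode (code f x m))) ! j = x j"
  by (simp add: code_def prod_encode_inverse nth_append del: upt_Suc)

lemma build:
  fixes I :: "nat set set" and E :: "(nat \<Rightarrow> nat) set" and e \<sigma> :: "nat \<Rightarrow> nat"
  assumes ideal: "is_ideal I" and finI: "fin_ideal \<subseteq> I"
    and med: "I_MED I E" and EG: "E = fst ` G" and cG: "clos2 G"
    and uniq: "\<And>f x y. (f, x) \<in> G \<Longrightarrow> (f, y) \<in> G \<Longrightarrow> x = y"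
    and e: "strict_mono e"
    and sig: "\<And>A. A \<in> I \<Longrightarrow> {n. n \<notin> range e \<and> \<sigma> n \<in> A} \<in> I"
    and hh: "\<And>h::nat\<Rightarrow>nat. \<exists>h'. \<forall>f::nat\<Rightarrow>nat. {n. f n = h' n} \<notin> I \<longrightarrow> {n. n \<notin> range e \<and> f (\<sigma> n) = h n} \<notin> I"
  shows "\<exists>F. closed F \<and> I_MED I F"
proof -
  have sub: "\<And>A B. A \<in> I \<Longrightarrow> B \<subseteq> A \<Longrightarrow> B \<in> I" and un: "\<And>A B. A \<in> I \<Longrightarrow> B \<in> I \<Longrightarrow> A \<union> B \<in> I"
    using ideal unfolding is_ideal_def by blast+
  have inje: "inj e" using e by (rule strict_mono_imp_inj_on)
  define mk where "mk = (\<lambda>f x n. if n \<in> range e then code f x (inv e n) else f (\<sigma> n))"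
  have mk_e: "mk f x (e m) = code f x m" for f x m
    by (simp add: mk_def inv_f_f[OF inje])
  define decf where "decf = (\<lambda>g i. list_decode (fst (prod_decode (g (e i)))) ! i)"
  define decx where "decx = (\<lambda>g i. list_decode (snd (prod_decode (g (e i)))) ! i)"
  have dec_agr: "decf g i = f' i \<and> decx g i = x' i" if "agr K (mk f' x') g" "e i < K" for g f' x' K i
  proof -
    have "g (e i) = code f' x' i" using that mk_e by (metis agr_def)
    then show ?thesis by (simp add: decf_def decx_def code_fst code_snd)
  qed
  define F where "F = (\<lambda>(f, x). mk f x) ` G"
  have "clos F"
    unfolding clos_def
  proof (intro allI impI)
    fix g assume a: "\<forall>k. \<exists>f\<in>F. agr k f g"
    have a': "\<exists>f' x'. (f', x') \<in> G \<and> agr K (mk f' x') g" for K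
      using a unfolding F_def by fast
    define f where "f = decf g"
    define x where "x = decx g"
    have fxG: "(f, x) \<in> G"
      using cG unfolding clos2_def
    proof (elim allE impE)
      show "\<forall>k. \<exists>f' x'. (f', x') \<in> G \<and> agr k f' f \<and> agr k x' x"
      proof
        fix k
        obtain f' x' where fx: "(f', x') \<in> G" "agr (Suc (e k)) (mk f' x') g" using a' by blast
        have "decf g i = f' i \<and> decx g i = x' i" if "i < k" for i
          using dec_agr[OF fx(2)] that e by (simp add: strict_mono_less less_Suc_eq)
        then have "agr k f' f \<and> agr k x' x" by (simp add: agr_def f_def x_def)
        then show "\<exists>f' x'. (f', x') \<in> G \<and> agr k f' f \<and> agr k x' x" using fx(1) by blast
      qed
    qed
    have "g = mk f x"
    proof
      fix n
      obtain f' x' where fx: "(f', x') \<in> G" "agr (Suc (n + e n + e (\<sigma> n))) (mk f' x') g" using a' by blast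
      have gn: "g n = mk f' x' n" using fx(2) by (simp add: agr_def)
      have ff: "f i = f' i \<and> x i = x' i" if "e i < Suc (n + e n + e (\<sigma> n))" for i
        using dec_agr[OF fx(2) that] by (simp add: f_def x_def)
      show "g n = mk f x n"
      proof (cases "n \<in> range e")
        case True
        then obtain m where m: "n = e m" by blast
        have "f i = f' i \<and> x i = x' i" if "i \<le> m" for i
        proof -
          have "e i \<le> e m" using that e by (simp add: strict_mono_less_eq)
          then show ?thesis using ff m by simp
        qed
        then have mf: "map f [0..<Suc m] = map f' [0..<Suc m]" and mx: "map x [0..<Suc m] = map x' [0..<Suc m]"
          by (auto simp del: upt_Suc)
        have "code f x m = code f' x' m" unfolding code_def mf mx by (rule refl)
        then show ?thesis using gn m mk_e by simp
      next
        case False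
        then show ?thesis using gn ff[of "\<sigma> n"] by (simp add: mk_def)
      qed
    qed
    then show "g \<in> F" using fxG unfolding F_def by force
  qed
  then have cF: "closed F" by (rule clos_closed)
  have "I_MED I F"
    unfolding I_MED_def
  proof (intro conjI ballI impI allI)
    fix g1 g2 assume g: "g1 \<in> F" "g2 \<in> F" "g1 \<noteq> g2"
    then obtain f1 x1 f2 x2 where fx: "(f1, x1) \<in> G" "(f2, x2) \<in> G" "g1 = mk f1 x1" "g2 = mk f2 x2"
      unfolding F_def by auto
    have "f1 \<noteq> f2" using fx g(3) uniq by blast
    then obtain i where i: "f1 i \<noteq> f2 i" by blast
    have "f1 \<in> E" "f2 \<in> E" using fx EG by force+
    then have eqI: "{n. f1 n = f2 n} \<in> I"
      using med \<open>f1 \<noteq> f2\<close> unfolding I_MED_def I_ED_def by blast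
    have "{n. g1 n = g2 n} \<subseteq> e ` {..<i} \<union> {n. n \<notin> range e \<and> \<sigma> n \<in> {n. f1 n = f2 n}}"
    proof
      fix n assume n: "n \<in> {n. g1 n = g2 n}"
      show "n \<in> e ` {..<i} \<union> {n. n \<notin> range e \<and> \<sigma> n \<in> {n. f1 n = f2 n}}"
      proof (cases "n \<in> range e")
        case True
        then obtain m where m: "n = e m" by blast
        then have "code f1 x1 m = code f2 x2 m" using n fx mk_e by simp
        then have "m < i"
          using i code_fst[of i m f1 x1] code_fst[of i m f2 x2] by (metis not_less)
        then show ?thesis using m by blast
      next
        case False
        then show ?thesis using n fx by (simp add: mk_def)
      qed
    qed
    moreover have "e ` {..<i} \<in> I" using finI by (auto simp: fin_ideal_def)
    ultimately show "I_ED I g1 g2"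
      unfolding I_ED_def using sig[OF eqI] un sub by blast
  next
    fix h :: "nat \<Rightarrow> nat"
    obtain h' where h': "\<forall>f. {n. f n = h' n} \<notin> I \<longrightarrow> {n. n \<notin> range e \<and> f (\<sigma> n) = h n} \<notin> I"
      using hh[of h] by blast
    obtain f where f: "f \<in> E" "\<not> I_ED I f h'" using med unfolding I_MED_def by blast
    then obtain x where fx: "(f, x) \<in> G" using EG by force
    have "{n. n \<notin> range e \<and> f (\<sigma> n) = h n} \<notin> I" using h' f(2) unfolding I_ED_def by blast
    moreover have "{n. n \<notin> range e \<and> f (\<sigma> n) = h n} \<subseteq> {n. mk f x n = h n}"
      by (auto simp: mk_def)
    ultimately have "\<not> I_ED I (mk f x) h" unfolding I_ED_def using sub by blast
    moreover have "mk f x \<in> F" using fx unfolding F_def by force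
    ultimately show "\<exists>g\<in>F. \<not> I_ED I g h" by blast
  qed
  then show ?thesis using cF by blast
qed

theorem theorem6p2:
  fixes I :: "nat set set"
  assumes "is_ideal I"
    and "fin_ideal \<subseteq> I"
    and "\<exists>E :: (nat \<Rightarrow> nat) set. E \<in> sets borel \<and> I_MED I E"
  shows "\<exists>E :: (nat \<Rightarrow> nat) set. closed E \<and> I_MED I E"
proof -
  have sub: "\<And>A B. A \<in> I \<Longrightarrow> B \<subseteq> A \<Longrightarrow> B \<in> I" and un: "\<And>A B. A \<in> I \<Longrightarrow> B \<in> I \<Longrightarrow> A \<union> B \<in> I"
    using assms(1) unfolding is_ideal_def by blast+
  have finI: "\<And>A. finite A \<Longrightarrow> A \<in> I" using assms(2) by (auto simp: fin_ideal_def)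
  obtain E where E: "E \<in> sets borel" "I_MED I E" using assms(3) by blast
  then have "PP E" using borel_PP by blast
  then obtain G where G: "clos2 G" "E = fst ` G" "\<And>f x y. (f, x) \<in> G \<Longrightarrow> (f, y) \<in> G \<Longrightarrow> x = y"
    unfolding PP_def by blast
  show ?thesis
  proof (cases "\<exists>Q\<in>I. infinite Q")
    case True
    then obtain Q where Q: "Q \<in> I" "infinite Q" by blast
    show ?thesis
    proof (rule build[OF assms(1,2) E(2) G(2,1) G(3), where e = "enumerate Q" and \<sigma> = id])
      show "strict_mono (enumerate Q)" using Q(2) by (rule strict_mono_enumerate)
      have rQ: "range (enumerate Q) = Q" using Q(2) by (rule range_enumerate)
      show "{n. n \<notin> range (enumerate Q) \<and> id n \<in> A} \<in> I" if "A \<in> I" for A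
        using sub[OF that, of "{n. n \<notin> range (enumerate Q) \<and> id n \<in> A}"] by auto
      show "\<exists>h'. \<forall>f::nat\<Rightarrow>nat. {n. f n = h' n} \<notin> I \<longrightarrow> {n. n \<notin> range (enumerate Q) \<and> f (id n) = h n} \<notin> I"
        for h :: "nat \<Rightarrow> nat"
      proof (intro exI allI impI)
        fix f :: "nat \<Rightarrow> nat" assume f: "{n. f n = h n} \<notin> I"
        show "{n. n \<notin> range (enumerate Q) \<and> f (id n) = h n} \<notin> I"
        proof
          assume "{n. n \<notin> range (enumerate Q) \<and> f (id n) = h n} \<in> I"
          then have "{n. n \<notin> range (enumerate Q) \<and> f (id n) = h n} \<union> Q \<in> I" using un Q(1) by blast
          moreover have "{n. f n = h n} \<subseteq> {n. n \<notin> range (enumerate Q) \<and> f (id n) = h n} \<union> Q"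
            using rQ by auto
          ultimately show False using sub f by blast
        qed
      qed
    qed
  next
    case False
    then have allfin: "\<And>A. A \<in> I \<Longrightarrow> finite A" by blast
    show ?thesis
    proof (rule build[OF assms(1,2) E(2) G(2,1) G(3), where e = "\<lambda>n. 2 * n + 1" and \<sigma> = "\<lambda>n. n div 2"])
      show "strict_mono (\<lambda>n::nat. 2 * n + 1)" by (rule strict_monoI) simp
      show "{n. n \<notin> range (\<lambda>n. 2 * n + 1) \<and> n div 2 \<in> A} \<in> I" if "A \<in> I" for A
      proof -
        have "{n. n \<notin> range (\<lambda>n. 2 * n + 1) \<and> n div 2 \<in> A} \<subseteq> (\<lambda>a. 2 * a) ` A \<union> (\<lambda>a. 2 * a + 1) ` A"
        proof
          fix n assume "n \<in> {n. n \<notin> range (\<lambda>n. 2 * n + 1) \<and> n div 2 \<in> A}"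
          then have "n div 2 \<in> A" by simp
          moreover have "n = 2 * (n div 2) \<or> n = 2 * (n div 2) + 1" by presburger
          ultimately show "n \<in> (\<lambda>a. 2 * a) ` A \<union> (\<lambda>a. 2 * a + 1) ` A" by force
        qed
        moreover have "finite ((\<lambda>a. 2 * a) ` A \<union> (\<lambda>a. 2 * a + 1) ` A)" using allfin[OF that] by simp
        ultimately show ?thesis using finI finite_subset by blast
      qed
      show "\<exists>h'. \<forall>f::nat\<Rightarrow>nat. {n. f n = h' n} \<notin> I \<longrightarrow> {n. n \<notin> range (\<lambda>n. 2 * n + 1) \<and> f (n div 2) = h n} \<notin> I"
        for h :: "nat \<Rightarrow> nat"
      proof (intro exI allI impI)
        fix f :: "nat \<Rightarrow> nat" assume f: "{n. f n = h (2 * n)} \<notin> I"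
        then have inf: "infinite {n. f n = h (2 * n)}" using finI by blast
        have "(\<lambda>a. 2 * a) ` {n. f n = h (2 * n)} \<subseteq> {n. n \<notin> range (\<lambda>n. 2 * n + 1) \<and> f (n div 2) = h n}"
          by auto presburger
        moreover have "infinite ((\<lambda>a::nat. 2 * a) ` {n. f n = h (2 * n)})"
          using inf finite_imageD inj_on_def by (metis (no_types, lifting) mult_left_cancel zero_neq_numeral)
        ultimately have "infinite {n. n \<notin> range (\<lambda>n. 2 * n + 1) \<and> f (n div 2) = h n}"
          using finite_subset by blast
        then show "{n. n \<notin> range (\<lambda>n. 2 * n + 1) \<and> f (n div 2) = h n} \<notin> I" using allfin by blast
      qed
    qed
  qed
qed

end
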